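(* For all $n\ge1$, $d\ge2$ and $1\le r\le n$, $$b_{n,d}(\Delta_{n-r})=\sum_{x}b_{n,d-1}(x),$$ where the sum ranges over all simple $n$-braids $x$ that are right divisible by $\Delta_{n-r}$ in $B_n^+$.
   Context: $B_n^+$ is the positive braid monoid with generators $\sigma_1,\dots,\sigma_{n-1}$ and relations $\sigma_i\sigma_j=\sigma_j\sigma_i$ ($|i-j|\ge2$), $\sigma_i\sigma_j\sigma_i=\sigma_j\sigma_i\sigma_j$ ($|i-j|=1$). $\Delta_1=1$, $\Delta_m=\sigma_1\cdots\sigma_{m-1}\Delta_{m-1}$, with the convention $\Delta_0=1$; $\Delta_m$ is viewed in $B_n^+$ for $m\le n$. Simple $n$-braids are the left (equivalently right) divisors of $\Delta_n$ in $B_n^+$. For simple $x$, $D_L(x)$ (resp. $D_R(x)$) is the set of $i\in\{1,\dots,n-1\}$ with $\sigma_i$ a left (resp. right) divisor of $x$. A sequence $(x_1,\dots,x_d)$ of simple $n$-braids is normal if $x_k=\gcd(\Delta_n,x_k\cdots x_d)$ (greatest common left divisor) for each $k$; equivalently $D_R(x_k)\supseteq D_L(x_{k+1})$ for all $k<d$. For a simple $n$-braid $x$, $b_{n,d}(x)$ is the number of normal sequences $(x_1,\dots,x_{d-1},x)$. *)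

theory Defs
  imports Main
begin

text \<open>Positive braid monoid B_n^+: words over generators 1..n-1 (letter i stands for sigma_i)
  modulo the congruence generated by the braid relations.\<close>

inductive braid_step :: "nat \<Rightarrow> nat list \<Rightarrow> nat list \<Rightarrow> bool" for n where
  comm: "\<lbrakk>1 \<le> i; i < n; 1 \<le> j; j < n; i + 2 \<le> j \<or> j + 2 \<le> i\<rbrakk>
          \<Longrightarrow> braid_step n (u @ [i, j] @ v) (u @ [j, i] @ v)"
| braid: "\<lbrakk>1 \<le> i; i < n; 1 \<le> j; j < n; i = j + 1 \<or> j = i + 1\<rbrakk>
          \<Longrightarrow> braid_step n (u @ [i, j, i] @ v) (u @ [j, i, j] @ v)"

definition braid_eq :: "nat \<Rightarrow> nat list \<Rightarrow> nat list \<Rightarrow> bool" where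
  "braid_eq n = (symclp (braid_step n))\<^sup>*\<^sup>*"

definition pos_words :: "nat \<Rightarrow> nat list set" where
  "pos_words n = {w. set w \<subseteq> {1..<n}}"

definition braid_cls :: "nat \<Rightarrow> nat list \<Rightarrow> nat list set" where
  "braid_cls n w = {v. braid_eq n w v}"

definition ldiv :: "nat \<Rightarrow> nat list \<Rightarrow> nat list \<Rightarrow> bool" where
  "ldiv n a b \<longleftrightarrow> (\<exists>c \<in> pos_words n. braid_eq n (a @ c) b)"

definition rdiv :: "nat \<Rightarrow> nat list \<Rightarrow> nat list \<Rightarrow> bool" where
  "rdiv n a b \<longleftrightarrow> (\<exists>c \<in> pos_words n. braid_eq n (c @ a) b)"

fun delta :: "nat \<Rightarrow> nat list" where
  "delta 0 = []"
| "delta (Suc m) = [1..<Suc m] @ delta m"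

definition simple_braids :: "nat \<Rightarrow> nat list set set" where
  "simple_braids n = {braid_cls n w | w. w \<in> pos_words n \<and> ldiv n w (delta n)}"

definition DL :: "nat \<Rightarrow> nat list set \<Rightarrow> nat set" where
  "DL n x = {i. 1 \<le> i \<and> i < n \<and> (\<exists>w \<in> x. ldiv n [i] w)}"

definition DR :: "nat \<Rightarrow> nat list set \<Rightarrow> nat set" where
  "DR n x = {i. 1 \<le> i \<and> i < n \<and> (\<exists>w \<in> x. rdiv n [i] w)}"

definition normal_seq :: "nat \<Rightarrow> nat list set list \<Rightarrow> bool" where
  "normal_seq n xs \<longleftrightarrow> set xs \<subseteq> simple_braids n \<and>
     (\<forall>k. Suc k < length xs \<longrightarrow> DL n (xs ! Suc k) \<subseteq> DR n (xs ! k))"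

definition bnd :: "nat \<Rightarrow> nat \<Rightarrow> nat list set \<Rightarrow> nat" where
  "bnd n d x = card {xs. length xs = d - 1 \<and> normal_seq n (xs @ [x])}"

end

theory Submission
  imports Defs
begin


lemma step_length: "braid_step n a b \<Longrightarrow> length a = length b"
  by (induction rule: braid_step.induct) auto

lemma step_set: "braid_step n a b \<Longrightarrow> set a = set b"
  by (induction rule: braid_step.induct) auto

lemma eq_length: "braid_eq n a b \<Longrightarrow> length a = length b"
  unfolding braid_eq_def
  by (induction rule: rtranclp_induct) (auto simp: symclp_def dest: step_length)

lemma eq_set: "braid_eq n a b \<Longrightarrow> set a = set b"
  unfolding braid_eq_def
  by (induction rule: rtranclp_induct) (auto simp: symclp_def dest: step_set)

lemma eq_refl[simp]: "braid_eq n a a"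
  unfolding braid_eq_def by simp

lemma eq_sym: "braid_eq n a b \<Longrightarrow> braid_eq n b a"
  unfolding braid_eq_def
proof (induction rule: rtranclp_induct)
  case (step y z)
  then have "symclp (braid_step n) z y" by (auto simp: symclp_def)
  with step show ?case by (meson converse_rtranclp_into_rtranclp)
qed simp

lemma eq_trans: "braid_eq n a b \<Longrightarrow> braid_eq n b c \<Longrightarrow> braid_eq n a c"
  unfolding braid_eq_def by simp

lemma step_ctx: "braid_step n a b \<Longrightarrow> braid_step n (u @ a @ v) (u @ b @ v)"
proof (induction rule: braid_step.induct)
  case (comm i j u' v')
  then show ?case using braid_step.comm[of i n j "u @ u'" "v' @ v"] by simp
next
  case (braid i j u' v')
  then show ?case using braid_step.braid[of i n j "u @ u'" "v' @ v"] by simp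
qed

lemma eq_ctx: "braid_eq n a b \<Longrightarrow> braid_eq n (u @ a @ v) (u @ b @ v)"
  unfolding braid_eq_def
proof (induction rule: rtranclp_induct)
  case base then show ?case by simp
next
  case (step y z)
  then have "symclp (braid_step n) (u @ y @ v) (u @ z @ v)"
    by (auto simp: symclp_def intro: step_ctx)
  with step show ?case by (meson rtranclp.rtrancl_into_rtrancl)
qed

lemma eq_cons: "braid_eq n a b \<Longrightarrow> braid_eq n (x # a) (x # b)"
  using eq_ctx[of n a b "[x]" "[]"] by simp

lemma eq_app_left: "braid_eq n a b \<Longrightarrow> braid_eq n (u @ a) (u @ b)"
  using eq_ctx[of n a b u "[]"] by simp

lemma eq_app_right: "braid_eq n a b \<Longrightarrow> braid_eq n (a @ v) (b @ v)"
  using eq_ctx[of n a b "[]" v] by simp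

definition far :: "nat \<Rightarrow> nat \<Rightarrow> nat \<Rightarrow> bool" where
  "far n i j \<longleftrightarrow> 1 \<le> i \<and> i < n \<and> 1 \<le> j \<and> j < n \<and> (i + 2 \<le> j \<or> j + 2 \<le> i)"

definition adj :: "nat \<Rightarrow> nat \<Rightarrow> nat \<Rightarrow> bool" where
  "adj n i j \<longleftrightarrow> 1 \<le> i \<and> i < n \<and> 1 \<le> j \<and> j < n \<and> (i = j + 1 \<or> j = i + 1)"

lemma far_sym: "far n i j \<Longrightarrow> far n j i" by (auto simp: far_def)
lemma adj_sym: "adj n i j \<Longrightarrow> adj n j i" by (auto simp: adj_def)

lemma eq_swap: "far n i j \<Longrightarrow> braid_eq n (u @ i # j # v) (u @ j # i # v)"
  unfolding braid_eq_def far_def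
  using braid_step.comm[of i n j u v] by (auto simp: symclp_def)

lemma eq_br: "adj n i j \<Longrightarrow> braid_eq n (u @ i # j # i # v) (u @ j # i # j # v)"
  unfolding braid_eq_def adj_def
  using braid_step.braid[of i n j u v] by (auto simp: symclp_def)

lemma eq_swap0: "far n i j \<Longrightarrow> braid_eq n (i # j # v) (j # i # v)"
  using eq_swap[of n i j "[]" v] by simp

lemma eq_br0: "adj n i j \<Longrightarrow> braid_eq n (i # j # i # v) (j # i # j # v)"
  using eq_br[of n i j "[]" v] by simp



declare eq_trans[trans]

definition R :: "nat \<Rightarrow> nat \<Rightarrow> nat list \<Rightarrow> nat \<Rightarrow> nat list \<Rightarrow> bool" where
 "R n i X j Y \<longleftrightarrow> (i = j \<and> braid_eq n X Y)
    \<or> (far n i j \<and> (\<exists>Z. braid_eq n X (j#Z) \<and> braid_eq n Y (i#Z)))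
    \<or> (adj n i j \<and> (\<exists>Z. braid_eq n X (j#i#Z) \<and> braid_eq n Y (i#j#Z)))"

lemma R_sym: "R n i X j Y \<Longrightarrow> R n j Y i X"
  unfolding R_def using far_sym adj_sym eq_sym by blast

lemma R_eqL: "R n i X j Y \<Longrightarrow> braid_eq n X X' \<Longrightarrow> R n i X' j Y"
  unfolding R_def using eq_sym eq_trans by blast

lemma R_eqR: "R n i X j Y \<Longrightarrow> braid_eq n Y Y' \<Longrightarrow> R n i X j Y'"
  unfolding R_def using eq_sym eq_trans by blast

lemma R_len: "R n i X j Y \<Longrightarrow> length X = length Y"
  unfolding R_def by (auto dest!: eq_length)

lemma R_refl: "R n i X i X"
  unfolding R_def by simp

lemma R_step_gen: "braid_step n W W' \<Longrightarrow> W = a#V \<Longrightarrow> W' = b#V' \<Longrightarrow> R n a V b V'"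
proof (induction rule: braid_step.induct)
  case (comm i j u v)
  show ?case
  proof (cases u)
    case Nil
    with comm have "a = i" "b = j" "V = j#v" "V' = i#v" "far n i j" by (auto simp: far_def)
    then show ?thesis unfolding R_def using eq_refl[of n "j#v"] eq_refl[of n "i#v"] by blast
  next
    case (Cons c u')
    with comm have "braid_step n V V'" using braid_step.comm[of i n j u' v] by auto
    then have "braid_eq n V V'" unfolding braid_eq_def by auto
    with comm Cons show ?thesis unfolding R_def by auto
  qed
next
  case (braid i j u v)
  show ?case
  proof (cases u)
    case Nil
    with braid have "a = i" "b = j" "V = j#i#v" "V' = i#j#v" "adj n i j" by (auto simp: adj_def)
    then show ?thesis unfolding R_def using eq_refl[of n "j#i#v"] eq_refl[of n "i#j#v"] by blast
  next
    case (Cons c u')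
    with braid have "braid_step n V V'" using braid_step.braid[of i n j u' v] by auto
    then have "braid_eq n V V'" unfolding braid_eq_def by auto
    with braid Cons show ?thesis unfolding R_def by auto
  qed
qed

definition IHG :: "nat \<Rightarrow> nat \<Rightarrow> bool" where
  "IHG n N \<longleftrightarrow> (\<forall>A B a b. length A < N \<longrightarrow> braid_eq n (a#A) (b#B) \<longrightarrow> R n a A b B)"

lemma IHG_R: "IHG n N \<Longrightarrow> length A < N \<Longrightarrow> braid_eq n (a#A) (b#B) \<Longrightarrow> R n a A b B"
  unfolding IHG_def by blast

lemma IHG_cancel: "IHG n N \<Longrightarrow> length A < N \<Longrightarrow> braid_eq n (a#A) (a#B) \<Longrightarrow> braid_eq n A B"
  using IHG_R[of n N A a a B] unfolding R_def far_def adj_def by auto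

lemma case3:
  assumes IH: "IHG n N" and len: "Suc (length Z1) \<le> N" and f1: "far n i j" and f2: "far n j k"
    and e: "braid_eq n (i#Z1) (k#Z2)"
  shows "R n i (j#Z1) k (j#Z2)"
proof -
  have r: "R n i Z1 k Z2" using IHG_R[OF IH _ e] len by simp
  consider (a) "i = k" "braid_eq n Z1 Z2"
    | (b) U where "far n i k" "braid_eq n Z1 (k#U)" "braid_eq n Z2 (i#U)"
    | (c) U where "adj n i k" "braid_eq n Z1 (k#i#U)" "braid_eq n Z2 (i#k#U)"
    using r unfolding R_def by blast
  then show ?thesis
  proof cases
    case a
    then show ?thesis unfolding R_def by (auto intro: eq_cons)
  next
    case (b U)
    have "braid_eq n (j#Z1) (j#k#U)" using b by (auto intro: eq_cons)
    also have "braid_eq n \<dots> (k#j#U)" using f2 by (rule eq_swap0)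
    finally have 1: "braid_eq n (j#Z1) (k#j#U)" .
    have "braid_eq n (j#Z2) (j#i#U)" using b by (auto intro: eq_cons)
    also have "braid_eq n \<dots> (i#j#U)" using f1 far_sym by (blast intro: eq_swap0)
    finally have 2: "braid_eq n (j#Z2) (i#j#U)" .
    show ?thesis unfolding R_def using b 1 2 by blast
  next
    case (c U)
    have fkj: "far n k j" "far n j i" using f1 f2 far_sym by auto
    have "braid_eq n (j#Z1) (j#k#i#U)" using c by (auto intro: eq_cons)
    also have "braid_eq n \<dots> (k#j#i#U)" using f2 by (rule eq_swap0)
    also have "braid_eq n \<dots> (k#i#j#U)" using eq_swap[OF fkj(2), of "[k]" U] by simp
    finally have 1: "braid_eq n (j#Z1) (k#i#j#U)" .
    have "braid_eq n (j#Z2) (j#i#k#U)" using c by (auto intro: eq_cons)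
    also have "braid_eq n \<dots> (i#j#k#U)" using fkj by (blast intro: eq_swap0)
    also have "braid_eq n \<dots> (i#k#j#U)" using eq_swap[OF f2, of "[i]" U] by simp
    finally have 2: "braid_eq n (j#Z2) (i#k#j#U)" .
    show ?thesis unfolding R_def using c 1 2 by blast
  qed
qed



lemma case4:
  assumes IH: "IHG n N" and len: "Suc (length Z1) \<le> N" and f1: "far n i j" and a2: "adj n j k"
    and e: "braid_eq n (i#Z1) (k#j#Z2)"
  shows "R n i (j#Z1) k (j#k#Z2)"
proof -
  have lz: "length Z1 = Suc (length Z2)" using eq_length[OF e] by simp
  have r: "R n i Z1 k (j#Z2)" using IHG_R[OF IH _ e] len by simp
  have nik: "i \<noteq> k" using f1 a2 unfolding far_def adj_def by auto
  have akj: "adj n k j" using a2 adj_sym by auto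
  have fji: "far n j i" using f1 far_sym by auto
  consider (b) U where "far n i k" "braid_eq n Z1 (k#U)" "braid_eq n (j#Z2) (i#U)"
    | (c) U where "adj n i k" "braid_eq n Z1 (k#i#U)" "braid_eq n (j#Z2) (i#k#U)"
    using r nik unfolding R_def by blast
  then show ?thesis
  proof cases
    case (b U)
    have r2: "R n j Z2 i U" using IHG_R[OF IH _ b(3)] len lz by simp
    then obtain V where V: "braid_eq n Z2 (i#V)" "braid_eq n U (j#V)"
      using fji unfolding R_def far_def adj_def by auto
    have fki: "far n k i" using b far_sym by auto
    have "braid_eq n (j#Z1) (j#k#U)" using b by (auto intro: eq_cons)
    also have "braid_eq n \<dots> (j#k#j#V)" using V by (auto intro: eq_cons)
    also have "braid_eq n \<dots> (k#j#k#V)" using a2 by (rule eq_br0)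
    finally have 1: "braid_eq n (j#Z1) (k#j#k#V)" .
    have "braid_eq n (j#k#Z2) (j#k#i#V)" using V by (auto intro: eq_cons)
    also have "braid_eq n \<dots> (j#i#k#V)" using eq_swap[OF fki, of "[j]" V] by simp
    also have "braid_eq n \<dots> (i#j#k#V)" using fji by (rule eq_swap0)
    finally have 2: "braid_eq n (j#k#Z2) (i#j#k#V)" .
    show ?thesis unfolding R_def using b 1 2 by blast
  next
    case (c U)
    have r2: "R n j Z2 i (k#U)" using IHG_R[OF IH _ c(3)] len lz by simp
    then obtain V where V: "braid_eq n Z2 (i#V)" "braid_eq n (k#U) (j#V)"
      using fji unfolding R_def far_def adj_def by auto
    have lu: "length Z2 = Suc (length U)" using eq_length[OF c(3)] by simp
    have r3: "R n k U j V" using IHG_R[OF IH _ V(2)] len lz lu by simp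
    then obtain S where S: "braid_eq n U (j#k#S)" "braid_eq n V (k#j#S)"
      using akj unfolding R_def far_def adj_def by auto
    have aik: "adj n i k" "adj n k i" using c adj_sym by auto
    have fij: "far n i j" using f1 .
    have "braid_eq n (j#Z1) (j#k#i#U)" using c by (auto intro: eq_cons)
    also have "braid_eq n \<dots> (j#k#i#j#k#S)" using eq_app_left[OF S(1), of "[j,k,i]"] by simp
    also have "braid_eq n \<dots> (j#k#j#i#k#S)" using eq_swap[OF fij, of "[j,k]" "k#S"] by simp
    also have "braid_eq n \<dots> (k#j#k#i#k#S)" using eq_br[OF a2, of "[]" "i#k#S"] by simp
    also have "braid_eq n \<dots> (k#j#i#k#i#S)" using eq_br[OF aik(2), of "[k,j]" "S"] by simp
    also have "braid_eq n \<dots> (k#i#j#k#i#S)" using eq_swap[OF fji, of "[k]" "k#i#S"] by simp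
    finally have 1: "braid_eq n (j#Z1) (k#i#(j#k#i#S))" by simp
    have "braid_eq n (j#k#Z2) (j#k#i#V)" using V by (auto intro: eq_cons)
    also have "braid_eq n \<dots> (j#k#i#k#j#S)" using eq_app_left[OF S(2), of "[j,k,i]"] by simp
    also have "braid_eq n \<dots> (j#i#k#i#j#S)" using eq_br[OF aik(2), of "[j]" "j#S"] by simp
    also have "braid_eq n \<dots> (j#i#k#j#i#S)" using eq_swap[OF fij, of "[j,i,k]" "S"] by simp
    also have "braid_eq n \<dots> (i#j#k#j#i#S)" using eq_swap[OF fji, of "[]" "k#j#i#S"] by simp
    also have "braid_eq n \<dots> (i#k#j#k#i#S)" using eq_br[OF a2, of "[i]" "i#S"] by simp
    finally have 2: "braid_eq n (j#k#Z2) (i#k#(j#k#i#S))" by simp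
    show ?thesis unfolding R_def using c 1 2 by blast
  qed
qed

lemma case6:
  assumes IH: "IHG n N" and len: "Suc (Suc (length Z1)) \<le> N" and a1: "adj n i j" and a2: "adj n j k"
    and e: "braid_eq n (i#j#Z1) (k#j#Z2)"
  shows "R n i (j#i#Z1) k (j#k#Z2)"
proof -
  have lz: "length Z1 = length Z2" using eq_length[OF e] by simp
  have r: "R n i (j#Z1) k (j#Z2)" using IHG_R[OF IH _ e] len by simp
  have nadj: "\<not> adj n i k" using a1 a2 unfolding adj_def by auto
  have aji: "adj n j i" and akj: "adj n k j" using a1 a2 adj_sym by auto
  consider (a) "i = k" "braid_eq n (j#Z1) (j#Z2)"
    | (b) P where "far n i k" "braid_eq n (j#Z1) (k#P)" "braid_eq n (j#Z2) (i#P)"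
    using r nadj unfolding R_def by blast
  then show ?thesis
  proof cases
    case a
    have "braid_eq n Z1 Z2" using IHG_cancel[OF IH _ a(2)] len by simp
    then have "braid_eq n (j#i#Z1) (j#k#Z2)" using a by (auto intro: eq_cons)
    then show ?thesis unfolding R_def using a by blast
  next
    case (b P)
    have fik: "far n i k" "far n k i" using b far_sym by auto
    have lp: "length Z1 = length P" using eq_length[OF b(2)] by simp
    have "R n j Z1 k P" using IHG_R[OF IH _ b(2)] len by simp
    then obtain Q where Q: "braid_eq n Z1 (k#j#Q)" "braid_eq n P (j#k#Q)"
      using a2 unfolding R_def far_def adj_def by auto
    have "R n j Z2 i P" using IHG_R[OF IH _ b(3)] len lz by simp
    then obtain T where T: "braid_eq n Z2 (i#j#T)" "braid_eq n P (j#i#T)"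
      using aji unfolding R_def far_def adj_def by auto
    have e2: "braid_eq n (j#k#Q) (j#i#T)" using Q(2) T(2) eq_sym eq_trans by blast
    have lq: "length P = Suc (Suc (length Q))" using eq_length[OF Q(2)] by simp
    have e3: "braid_eq n (k#Q) (i#T)" using IHG_cancel[OF IH _ e2] len lp lq by simp
    have "R n k Q i T" using IHG_R[OF IH _ e3] len lp lq by simp
    then obtain S where S: "braid_eq n Q (i#S)" "braid_eq n T (k#S)"
      using fik unfolding R_def far_def adj_def by auto
    have "braid_eq n (j#i#Z1) (j#i#k#j#Q)" using eq_app_left[OF Q(1), of "[j,i]"] by simp
    also have "braid_eq n \<dots> (j#i#k#j#i#S)" using eq_app_left[OF S(1), of "[j,i,k,j]"] by simp
    also have "braid_eq n \<dots> (j#k#i#j#i#S)" using eq_swap[OF fik(1), of "[j]" "j#i#S"] by simp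
    also have "braid_eq n \<dots> (j#k#j#i#j#S)" using eq_br[OF a1, of "[j,k]" "S"] by simp
    also have "braid_eq n \<dots> (k#j#k#i#j#S)" using eq_br[OF a2, of "[]" "i#j#S"] by simp
    finally have 1: "braid_eq n (j#i#Z1) (k#(j#k#i#j#S))" by simp
    have "braid_eq n (j#k#Z2) (j#k#i#j#T)" using eq_app_left[OF T(1), of "[j,k]"] by simp
    also have "braid_eq n \<dots> (j#k#i#j#k#S)" using eq_app_left[OF S(2), of "[j,k,i,j]"] by simp
    also have "braid_eq n \<dots> (j#i#k#j#k#S)" using eq_swap[OF fik(2), of "[j]" "j#k#S"] by simp
    also have "braid_eq n \<dots> (j#i#j#k#j#S)" using eq_br[OF akj, of "[j,i]" "S"] by simp
    also have "braid_eq n \<dots> (i#j#i#k#j#S)" using eq_br[OF aji, of "[]" "k#j#S"] by simp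
    also have "braid_eq n \<dots> (i#j#k#i#j#S)" using eq_swap[OF fik(1), of "[i,j]" "j#S"] by simp
    finally have 2: "braid_eq n (j#k#Z2) (i#(j#k#i#j#S))" by simp
    show ?thesis unfolding R_def using b 1 2 by blast
  qed
qed



lemma T4:
  assumes IH: "IHG n N" and len: "length Y = N" and f1: "far n i j" and a2: "adj n j k"
    and r1: "R n i X j Y" and r2: "R n j Y k W"
  shows "R n i X k W"
proof -
  obtain Z1 where Z1: "braid_eq n X (j#Z1)" "braid_eq n Y (i#Z1)"
    using r1 f1 unfolding R_def far_def adj_def by auto
  obtain Z2 where Z2: "braid_eq n Y (k#j#Z2)" "braid_eq n W (j#k#Z2)"
    using r2 a2 unfolding R_def far_def adj_def by auto
  have e: "braid_eq n (i#Z1) (k#j#Z2)" using Z1 Z2 eq_sym eq_trans by blast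
  have l: "Suc (length Z1) \<le> N" using eq_length[OF Z1(2)] len by simp
  have "R n i (j#Z1) k (j#k#Z2)" by (rule case4[OF IH l f1 a2 e])
  then show ?thesis using R_eqL R_eqR Z1 Z2 eq_sym by blast
qed

lemma Rtrans:
  assumes IH: "IHG n N" and len: "length Y = N"
    and r1: "R n i X j Y" and r2: "R n j Y k W"
  shows "R n i X k W"
proof -
  consider (e1) "i = j" "braid_eq n X Y" | (f1) "far n i j" | (a1) "adj n i j"
    using r1 unfolding R_def by blast
  then show ?thesis
  proof cases
    case e1 then show ?thesis using r2 R_eqL eq_sym by blast
  next
    case f1
    consider (e2) "j = k" "braid_eq n Y W" | (f2) "far n j k" | (a2) "adj n j k"
      using r2 unfolding R_def by blast
    then show ?thesis
    proof cases
      case e2 then show ?thesis using r1 R_eqR by blast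
    next
      case f2
      obtain Z1 where Z1: "braid_eq n X (j#Z1)" "braid_eq n Y (i#Z1)"
        using r1 f1 unfolding R_def far_def adj_def by auto
      obtain Z2 where Z2: "braid_eq n Y (k#Z2)" "braid_eq n W (j#Z2)"
        using r2 f2 unfolding R_def far_def adj_def by auto
      have e: "braid_eq n (i#Z1) (k#Z2)" using Z1 Z2 eq_sym eq_trans by blast
      have l: "Suc (length Z1) \<le> N" using eq_length[OF Z1(2)] len by simp
      have "R n i (j#Z1) k (j#Z2)" by (rule case3[OF IH l f1 f2 e])
      then show ?thesis using R_eqL R_eqR Z1 Z2 eq_sym by blast
    next
      case a2 then show ?thesis using T4[OF IH len f1 a2 r1 r2] by blast
    qed
  next
    case a1
    consider (e2) "j = k" "braid_eq n Y W" | (f2) "far n j k" | (a2) "adj n j k"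
      using r2 unfolding R_def by blast
    then show ?thesis
    proof cases
      case e2 then show ?thesis using r1 R_eqR by blast
    next
      case f2
      have "R n k W i X"
        using T4[OF IH len far_sym[OF f2] adj_sym[OF a1] R_sym[OF r2] R_sym[OF r1]] .
      then show ?thesis by (rule R_sym)
    next
      case a2
      obtain Z1 where Z1: "braid_eq n X (j#i#Z1)" "braid_eq n Y (i#j#Z1)"
        using r1 a1 unfolding R_def far_def adj_def by auto
      obtain Z2 where Z2: "braid_eq n Y (k#j#Z2)" "braid_eq n W (j#k#Z2)"
        using r2 a2 unfolding R_def far_def adj_def by auto
      have e: "braid_eq n (i#j#Z1) (k#j#Z2)" using Z1 Z2 eq_sym eq_trans by blast
      have l: "Suc (Suc (length Z1)) \<le> N" using eq_length[OF Z1(2)] len by simp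
      have "R n i (j#i#Z1) k (j#k#Z2)" by (rule case6[OF IH l a1 a2 e])
      then show ?thesis using R_eqL R_eqR Z1 Z2 eq_sym by blast
    qed
  qed
qed

lemma G_aux: "\<forall>X Y i j. length X = N \<longrightarrow> braid_eq n (i#X) (j#Y) \<longrightarrow> R n i X j Y"
proof (induction N rule: less_induct)
  case (less N)
  have IH: "IHG n N" unfolding IHG_def using less by blast
  show ?case
  proof (intro allI impI)
    fix X Y i j
    assume lX: "length X = N" and e: "braid_eq n (i#X) (j#Y)"
    have "\<And>W. braid_eq n (i#X) W \<Longrightarrow> \<exists>b V. W = b#V \<and> R n i X b V"
      unfolding braid_eq_def
    proof -
      fix W assume "(symclp (braid_step n))\<^sup>*\<^sup>* (i#X) W"
      then show "\<exists>b V. W = b#V \<and> R n i X b V"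
      proof (induction rule: rtranclp_induct)
        case base then show ?case using R_refl by blast
      next
        case (step W W')
        then obtain b V where bV: "W = b#V" "R n i X b V" by blast
        have "length W' = length W" using step(2) by (auto simp: symclp_def dest: step_length)
        then obtain b' V' where W': "W' = b'#V'" using bV by (cases W') auto
        have "R n b V b' V'"
          using step(2) bV W' R_step_gen R_sym unfolding symclp_def by blast
        moreover have "length V = N" using R_len[OF bV(2)] lX by simp
        ultimately have "R n i X b' V'" using Rtrans[OF IH _ bV(2)] by blast
        then show ?case using W' by blast
      qed
    qed
    from this[OF e] show "R n i X j Y" by blast
  qed
qed

lemma G: "braid_eq n (i#X) (j#Y) \<Longrightarrow> R n i X j Y"
  using G_aux by blast



lemma cancel1: "braid_eq n (a#A) (a#B) \<Longrightarrow> braid_eq n A B"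
  using G[of n a A a B] unfolding R_def far_def adj_def by auto

lemma cancel: "braid_eq n (p@A) (p@B) \<Longrightarrow> braid_eq n A B"
  by (induction p) (auto dest: cancel1)

lemma Pass: "j \<notin> set W \<Longrightarrow> braid_eq n (W@y) (j#z) \<Longrightarrow> \<exists>Z. braid_eq n y (j#Z)"
proof (induction W arbitrary: z)
  case Nil then show ?case by auto
next
  case (Cons a W)
  have "R n a (W@y) j z" using G Cons.prems by simp
  moreover have "a \<noteq> j" using Cons.prems by auto
  ultimately obtain z' where "braid_eq n (W@y) (j#z')"
    unfolding R_def by blast
  then show ?case using Cons by auto
qed

lemma commute: "\<forall>a\<in>set Q. far n a k \<Longrightarrow> braid_eq n (Q @ k # V) (k # Q @ V)"
proof (induction Q)
  case Nil then show ?case by simp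
next
  case (Cons a Q)
  then have "braid_eq n (a # Q @ k # V) (a # k # Q @ V)" by (auto intro: eq_cons)
  also have "braid_eq n \<dots> (k # a # Q @ V)" using Cons.prems by (auto intro: eq_swap0)
  finally show ?case by simp
qed

fun desc :: "nat \<Rightarrow> nat list" where
  "desc 0 = []"
| "desc (Suc k) = Suc k # desc k"

lemma set_desc: "set (desc k) = {1..k}"
  by (induction k) auto

lemma set_delta: "set (delta k) = {1..<k}"
  by (induction k) auto

definition dv :: "nat \<Rightarrow> nat list \<Rightarrow> nat list \<Rightarrow> bool" where
  "dv n a b \<longleftrightarrow> (\<exists>c. braid_eq n (a@c) b)"

lemma dv_eq: "dv n a b \<Longrightarrow> braid_eq n b b' \<Longrightarrow> dv n a b'"
  unfolding dv_def using eq_trans by blast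

lemma dv_eq1: "dv n a b \<Longrightarrow> braid_eq n a a' \<Longrightarrow> dv n a' b"
  unfolding dv_def using eq_trans eq_app_right eq_sym by blast

lemma dv_trans: "dv n a b \<Longrightarrow> dv n b c \<Longrightarrow> dv n a c"
  unfolding dv_def by (metis append.assoc eq_app_right eq_trans)

lemma dv_app: "dv n a (a @ c)"
  unfolding dv_def using eq_refl by blast

lemma far_desc: "b < n \<Longrightarrow> k + 2 \<le> b \<Longrightarrow> \<forall>a\<in>set (desc k). far n a b"
  by (auto simp: set_desc far_def)

lemma Ell: "Suc k < n \<Longrightarrow> dv n (desc k) u \<Longrightarrow> dv n [Suc k] u \<Longrightarrow> dv n (desc k @ desc (Suc k)) u"
proof (induction k arbitrary: u)
  case 0 then show ?case by simp
next
  case (Suc k)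
  define a where "a = Suc k"
  define b where "b = Suc a"
  define Q where "Q = desc k"
  have dsa: "desc (Suc k) = a # Q" "desc (Suc (Suc k)) = b # desc a" unfolding a_def b_def Q_def by simp_all
  obtain w where w: "braid_eq n (a # Q @ w) u" using Suc.prems(2) dsa unfolding dv_def by auto
  obtain z where z: "braid_eq n (b # z) u" using Suc.prems(3) unfolding dv_def b_def a_def by auto
  have "R n a (Q@w) b z" using G w z eq_sym eq_trans by blast
  moreover have "adj n a b" using Suc.prems unfolding adj_def a_def b_def by auto
  ultimately obtain V where V: "braid_eq n (Q@w) (b#a#V)"
    unfolding R_def far_def adj_def by auto
  have bQ: "b \<notin> set Q" unfolding Q_def b_def a_def set_desc by auto
  obtain w' where w': "braid_eq n w (b#w')" using Pass[OF bQ V] by blast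
  have fQ: "\<forall>c\<in>set Q. far n c b" unfolding Q_def using far_desc Suc.prems(1) b_def a_def by auto
  have cQ: "braid_eq n (Q @ b # w') (b # Q @ w')" using commute[OF fQ] .
  have "braid_eq n (b # Q @ w') (b # a # V)"
    using cQ eq_app_left[OF w', of Q] V eq_sym eq_trans by blast
  then have u2: "braid_eq n (Q @ w') (a # V)" by (rule cancel1)
  have h1: "dv n (desc k) (Q@w')" unfolding dv_def Q_def using eq_refl by blast
  have h2: "dv n [Suc k] (Q@w')" unfolding dv_def using u2 eq_sym unfolding a_def by auto
  have "dv n (desc k @ desc (Suc k)) (Q @ w')"
    using Suc.IH[OF _ h1 h2] Suc.prems(1) by simp
  then obtain t where t: "braid_eq n (Q @ desc a @ t) (Q @ w')"
    unfolding dv_def Q_def a_def by auto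
  have "braid_eq n (a # b # Q @ desc a @ t) (a # b # Q @ w')"
    using t by (auto intro: eq_cons)
  also have "braid_eq n \<dots> (a # Q @ b # w')" using cQ eq_sym by (auto intro: eq_cons)
  also have "braid_eq n \<dots> (a # Q @ w)" using w' eq_sym eq_app_left[of n "b#w'" w "a#Q"] by auto
  also have "braid_eq n \<dots> u" by (rule w)
  finally have 1: "braid_eq n (a # b # Q @ desc a @ t) u" .
  have 2: "braid_eq n (a # Q @ b # desc a @ t) (a # b # Q @ desc a @ t)"
    using commute[OF fQ, of "desc a @ t"] by (auto intro: eq_cons)
  have 3: "(desc (Suc k) @ desc (Suc (Suc k))) @ t = a # Q @ b # desc a @ t" unfolding a_def b_def Q_def by simp
  have "braid_eq n ((desc (Suc k) @ desc (Suc (Suc k))) @ t) u"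
    unfolding 3 by (rule eq_trans[OF 2 1])
  then show ?case unfolding dv_def by blast
qed

lemma D1: "k < n \<Longrightarrow> braid_eq n (delta (Suc k)) (delta k @ desc k)"
proof (induction k)
  case 0 then show ?case by simp
next
  case (Suc k)
  have u: "[1..<Suc (Suc k)] = [1..<Suc k] @ [Suc k]" by simp
  have "braid_eq n (delta (Suc (Suc k))) ([1..<Suc k] @ [Suc k] @ delta (Suc k))" using u by simp
  also have "braid_eq n \<dots> ([1..<Suc k] @ [Suc k] @ delta k @ desc k)"
    using Suc eq_app_left[of n "delta (Suc k)" "delta k @ desc k" "[1..<Suc k] @ [Suc k]"] by simp
  also have "braid_eq n \<dots> ([1..<Suc k] @ delta k @ Suc k # desc k)"
  proof -
    have "\<forall>a\<in>set (delta k). far n a (Suc k)" using Suc.prems by (auto simp: set_delta far_def)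
    from commute[OF this, of "desc k"] show ?thesis
      using eq_app_left eq_sym by fastforce
  qed
  finally show ?case by simp
qed

lemma Claim: "m \<le> n \<Longrightarrow> (\<forall>i. 1 \<le> i \<and> i < m \<longrightarrow> dv n [i] y) \<Longrightarrow> dv n (delta m) y"
proof (induction m)
  case 0 then show ?case unfolding dv_def by (intro exI[of _ y]) simp
next
  case (Suc m)
  show ?case
  proof (cases m)
    case 0 then show ?thesis unfolding dv_def by (intro exI[of _ y]) simp
  next
    case (Suc p)
    have IH: "dv n (delta m) y" using Suc.IH Suc.prems by auto
    then obtain c where c: "braid_eq n (delta p @ desc p @ c) y"
      using D1[of p n] Suc.prems(1) \<open>m = Suc p\<close> unfolding dv_def
      by (metis append.assoc eq_app_right eq_sym eq_trans Suc_lessD less_eq_Suc_le)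
    obtain z where z: "braid_eq n (Suc p # z) y"
      using Suc.prems(2) \<open>m = Suc p\<close> unfolding dv_def by fastforce
    have "Suc p \<notin> set (delta p)" by (simp add: set_delta)
    then obtain Z where Z: "braid_eq n (desc p @ c) (Suc p # Z)"
      using Pass[of "Suc p" "delta p" n "desc p @ c" z] c z eq_sym eq_trans by blast
    have h1: "dv n (desc p) (desc p @ c)" unfolding dv_def by (intro exI[of _ c]) simp
    have h2: "dv n [Suc p] (desc p @ c)" unfolding dv_def using Z eq_sym by auto
    have "dv n (desc p @ desc (Suc p)) (desc p @ c)"
      using Ell[OF _ h1 h2] Suc.prems(1) \<open>m = Suc p\<close> by simp
    then obtain t where t: "braid_eq n (desc p @ desc (Suc p) @ t) (desc p @ c)"
      unfolding dv_def by auto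
    have "braid_eq n (delta (Suc (Suc p)) @ t) (delta (Suc p) @ desc (Suc p) @ t)"
      using D1[of "Suc p" n] Suc.prems(1) \<open>m = Suc p\<close> eq_app_right by fastforce
    also have "braid_eq n \<dots> (delta p @ desc p @ desc (Suc p) @ t)"
    proof -
      have d: "braid_eq n (delta (Suc p)) (delta p @ desc p)" using D1[of p n] Suc.prems(1) \<open>m = Suc p\<close> by simp
      show ?thesis using eq_app_right[OF d, of "desc (Suc p) @ t"] by (simp only: append.assoc)
    qed
    also have "braid_eq n \<dots> (delta p @ desc p @ c)"
      using eq_app_left[OF t] by simp
    also have "braid_eq n \<dots> y" by (rule c)
    finally show ?thesis using \<open>m = Suc p\<close> unfolding dv_def by blast
  qed
qed



lemma DD: "Suc k < n \<Longrightarrow> \<exists>R. braid_eq n (desc k @ desc (Suc k)) (Suc k # R)"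
proof (induction k)
  case 0 then show ?case by (intro exI[of _ "[]"]) simp
next
  case (Suc k)
  define a where "a = Suc k"
  define b where "b = Suc a"
  have fQ: "\<forall>c\<in>set (desc k). far n c b" using far_desc Suc.prems b_def a_def by auto
  obtain R where R: "braid_eq n (desc k @ desc a) (a # R)" using Suc a_def by auto
  have ab: "adj n a b" using Suc.prems unfolding adj_def a_def b_def by auto
  have "braid_eq n (a # desc k @ b # desc a) (a # b # desc k @ desc a)"
    using commute[OF fQ, of "desc a"] by (auto intro: eq_cons)
  also have "braid_eq n \<dots> (a # b # a # R)" using R by (auto intro: eq_cons)
  also have "braid_eq n \<dots> (b # a # b # R)" using ab by (rule eq_br0)
  finally have "braid_eq n (desc (Suc k) @ desc (Suc (Suc k))) (b # a # b # R)"
    unfolding a_def b_def by simp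
  then show ?case unfolding b_def a_def by blast
qed

lemma LD: "m \<le> n \<Longrightarrow> 1 \<le> i \<Longrightarrow> i < m \<Longrightarrow> dv n [i] (delta m)"
proof (induction m arbitrary: i)
  case 0 then show ?case by simp
next
  case (Suc m)
  have d: "braid_eq n (delta (Suc m)) (delta m @ desc m)" using D1[of m n] Suc.prems by simp
  show ?case
  proof (cases "i < m")
    case True
    then have "dv n [i] (delta m)" using Suc by simp
    moreover have "dv n (delta m) (delta (Suc m))" using d eq_sym dv_app dv_eq by blast
    ultimately show ?thesis using dv_trans by blast
  next
    case False
    then have im: "i = m" using Suc.prems by simp
    then obtain p where p: "m = Suc p" using Suc.prems by (cases m) auto
    have d2: "braid_eq n (delta (Suc p)) (delta p @ desc p)" using D1[of p n] Suc.prems p by simp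
    obtain R where R: "braid_eq n (desc p @ desc (Suc p)) (Suc p # R)" using DD[of p n] Suc.prems p by auto
    have fQ: "\<forall>c\<in>set (delta p). far n c (Suc p)" using Suc.prems p by (auto simp: set_delta far_def)
    have "braid_eq n (delta (Suc m)) (delta (Suc p) @ desc (Suc p))" using d p by simp
    also have "braid_eq n \<dots> (delta p @ desc p @ desc (Suc p))"
      using eq_app_right[OF d2, of "desc (Suc p)"] by (simp only: append.assoc)
    also have "braid_eq n \<dots> (delta p @ Suc p # R)" using eq_app_left[OF R] by simp
    also have "braid_eq n \<dots> (Suc p # delta p @ R)" using commute[OF fQ] by simp
    finally have "braid_eq n (delta (Suc m)) ([i] @ delta p @ R)" using im p by simp
    then show ?thesis unfolding dv_def using eq_sym by blast
  qed
qed

lemma step_rev: "braid_step n a b \<Longrightarrow> symclp (braid_step n) (rev a) (rev b)"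
proof (induction rule: braid_step.induct)
  case (comm i j u v)
  then have "braid_step n (rev v @ [j, i] @ rev u) (rev v @ [i, j] @ rev u)"
    by (intro braid_step.comm) auto
  then show ?case by (simp add: symclp_def)
next
  case (braid i j u v)
  then have "braid_step n (rev v @ [i, j, i] @ rev u) (rev v @ [j, i, j] @ rev u)"
    by (intro braid_step.braid) auto
  then show ?case by (simp add: symclp_def)
qed

lemma eq_rev: "braid_eq n a b \<Longrightarrow> braid_eq n (rev a) (rev b)"
  unfolding braid_eq_def
proof (induction rule: rtranclp_induct)
  case (step y z)
  then have "symclp (braid_step n) (rev y) (rev z)"
    by (auto simp: symclp_def dest: step_rev)
  with step show ?case by (meson rtranclp.rtrancl_into_rtrancl)
qed simp

lemma rev_upt: "rev [1..<Suc k] = desc k"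
  by (induction k) auto

lemma rev_delta: "m \<le> n \<Longrightarrow> braid_eq n (rev (delta m)) (delta m)"
proof (induction m)
  case 0 then show ?case by simp
next
  case (Suc k)
  have "rev (delta (Suc k)) = rev (delta k) @ desc k" by (simp only: delta.simps rev_append rev_upt)
  then have "braid_eq n (rev (delta (Suc k))) (rev (delta k) @ desc k)" by simp
  also have "braid_eq n \<dots> (delta k @ desc k)" using Suc eq_app_right by simp
  also have "braid_eq n \<dots> (delta (Suc k))" using D1[of k n] Suc.prems eq_sym by simp
  finally show ?case .
qed



lemma normal_snoc:
  "normal_seq n (zs @ [y]) \<longleftrightarrow> normal_seq n zs \<and> y \<in> simple_braids n \<and>
     (zs \<noteq> [] \<longrightarrow> DL n y \<subseteq> DR n (last zs))"
proof
  assume h: "normal_seq n (zs @ [y])"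
  have s: "set zs \<subseteq> simple_braids n" "y \<in> simple_braids n" using h unfolding normal_seq_def by auto
  have c: "\<And>k. Suc k < Suc (length zs) \<Longrightarrow> DL n ((zs@[y]) ! Suc k) \<subseteq> DR n ((zs@[y]) ! k)"
    using h unfolding normal_seq_def by auto
  have 1: "\<forall>k. Suc k < length zs \<longrightarrow> DL n (zs ! Suc k) \<subseteq> DR n (zs ! k)"
  proof (intro allI impI)
    fix k assume k: "Suc k < length zs"
    from c[of k] k show "DL n (zs ! Suc k) \<subseteq> DR n (zs ! k)" by (simp add: nth_append)
  qed
  have 2: "zs \<noteq> [] \<longrightarrow> DL n y \<subseteq> DR n (last zs)"
  proof
    assume ne: "zs \<noteq> []"
    then obtain k where k: "length zs = Suc k" by (cases zs) auto
    from c[of k] k ne show "DL n y \<subseteq> DR n (last zs)"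
      by (simp add: nth_append last_conv_nth)
  qed
  show "normal_seq n zs \<and> y \<in> simple_braids n \<and> (zs \<noteq> [] \<longrightarrow> DL n y \<subseteq> DR n (last zs))"
    using s 1 2 unfolding normal_seq_def by auto
next
  assume h: "normal_seq n zs \<and> y \<in> simple_braids n \<and> (zs \<noteq> [] \<longrightarrow> DL n y \<subseteq> DR n (last zs))"
  have s: "set (zs @ [y]) \<subseteq> simple_braids n" using h unfolding normal_seq_def by auto
  have c: "\<forall>k. Suc k < length (zs @ [y]) \<longrightarrow> DL n ((zs@[y]) ! Suc k) \<subseteq> DR n ((zs@[y]) ! k)"
  proof (intro allI impI)
    fix k assume k: "Suc k < length (zs @ [y])"
    show "DL n ((zs@[y]) ! Suc k) \<subseteq> DR n ((zs@[y]) ! k)"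
    proof (cases "Suc k < length zs")
      case True
      then show ?thesis using h unfolding normal_seq_def by (simp add: nth_append)
    next
      case False
      then have kk: "Suc k = length zs" using k by simp
      then have "zs \<noteq> []" by auto
      moreover have "k = length zs - Suc 0" using kk by simp
      ultimately show ?thesis using h kk by (simp add: nth_append last_conv_nth)
    qed
  qed
  show "normal_seq n (zs @ [y])" using s c unfolding normal_seq_def by blast
qed

lemma pos_eq: "w0 \<in> pos_words n \<Longrightarrow> braid_eq n w0 w \<Longrightarrow> w \<in> pos_words n"
  unfolding pos_words_def using eq_set by blast

lemma ldiv_dv: "b \<in> pos_words n \<Longrightarrow> ldiv n a b \<longleftrightarrow> dv n a b"
  unfolding ldiv_def dv_def pos_words_def
  by (metis (no_types, lifting) Un_subset_iff eq_set mem_Collect_eq set_append)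

lemma rdiv_dv: "b \<in> pos_words n \<Longrightarrow> rdiv n a b \<longleftrightarrow> dv n (rev a) (rev b)"
proof
  assume "rdiv n a b"
  then obtain c where "braid_eq n (c @ a) b" unfolding rdiv_def by auto
  then have "braid_eq n (rev a @ rev c) (rev b)" using eq_rev by fastforce
  then show "dv n (rev a) (rev b)" unfolding dv_def by blast
next
  assume b: "b \<in> pos_words n" and "dv n (rev a) (rev b)"
  then obtain c where c: "braid_eq n (rev a @ c) (rev b)" unfolding dv_def by auto
  then have e: "braid_eq n (rev c @ a) b" using eq_rev by fastforce
  then have "rev c \<in> pos_words n" using b eq_set unfolding pos_words_def by fastforce
  then show "rdiv n a b" unfolding rdiv_def using e by blast
qed

lemma rdiv_eq: "rdiv n a w \<Longrightarrow> braid_eq n w w' \<Longrightarrow> rdiv n a w'"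
  unfolding rdiv_def using eq_trans by blast

lemma cls_mem: "w \<in> braid_cls n w0 \<longleftrightarrow> braid_eq n w0 w"
  unfolding braid_cls_def by simp

lemma finite_simple: "finite (simple_braids n)"
proof -
  have "simple_braids n \<subseteq> braid_cls n ` {w. set w \<subseteq> {1..<n} \<and> length w \<le> length (delta n)}"
  proof
    fix x assume "x \<in> simple_braids n"
    then obtain w where w: "x = braid_cls n w" "w \<in> pos_words n" "ldiv n w (delta n)"
      unfolding simple_braids_def by auto
    then obtain c where "braid_eq n (w @ c) (delta n)" unfolding ldiv_def by auto
    then have "length w \<le> length (delta n)" using eq_length by fastforce
    then show "x \<in> braid_cls n ` {w. set w \<subseteq> {1..<n} \<and> length w \<le> length (delta n)}"
      using w unfolding pos_words_def by auto
  qed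
  moreover have "finite {w. set w \<subseteq> {1..<n} \<and> length w \<le> length (delta n)}"
    by (rule finite_lists_length_le) simp
  ultimately show ?thesis using finite_surj by blast
qed



theorem lemma4p3:
  fixes n d r :: nat
  assumes "n \<ge> 1" and "d \<ge> 2" and "1 \<le> r" and "r \<le> n"
  shows "bnd n d (braid_cls n (delta (n - r))) =
    (\<Sum>x \<in> {x \<in> simple_braids n. \<exists>w \<in> x. rdiv n (delta (n - r)) w}. bnd n (d - 1) x)"
proof -
  define m where "m = n - r"
  have mn: "m < n" using assms unfolding m_def by simp
  define D where "D = braid_cls n (delta m)"
  define S where "S = simple_braids n"
  define T where "T = {x \<in> S. \<exists>w \<in> x. rdiv n (delta m) w}"
  have posd: "delta m \<in> pos_words n" using mn unfolding pos_words_def by (auto simp: set_delta)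
  have posn: "delta n \<in> pos_words n" unfolding pos_words_def by (auto simp: set_delta)
  have F1: "D \<in> S"
  proof -
    have "dv n (delta m) (delta n)"
      using Claim[of m n "delta n"] LD[of n n] mn by auto
    then have "ldiv n (delta m) (delta n)" using ldiv_dv posn by blast
    then show ?thesis unfolding D_def S_def simple_braids_def using posd by blast
  qed
  have F2: "DL n D = {i. 1 \<le> i \<and> i < m}"
  proof (intro set_eqI iffI)
    fix i assume "i \<in> DL n D"
    then obtain w c where w: "braid_eq n (delta m) w" "braid_eq n ([i] @ c) w"
      unfolding DL_def D_def ldiv_def by (auto simp: cls_mem)
    then have "set ([i] @ c) = set (delta m)" using eq_set eq_sym eq_trans by metis
    then have "i \<in> set (delta m)" by auto
    then show "i \<in> {i. 1 \<le> i \<and> i < m}" by (simp add: set_delta)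
  next
    fix i assume i: "i \<in> {i. 1 \<le> i \<and> i < m}"
    then have "dv n [i] (delta m)" using LD[of m n i] mn by auto
    then have "ldiv n [i] (delta m)" using ldiv_dv posd by blast
    moreover have "delta m \<in> D" unfolding D_def cls_mem by simp
    ultimately show "i \<in> DL n D" unfolding DL_def using i mn by auto
  qed
  have F3: "x \<in> S \<Longrightarrow> (DL n D \<subseteq> DR n x \<longleftrightarrow> x \<in> T)" for x
  proof -
    assume "x \<in> S"
    then obtain w0 where w0: "x = braid_cls n w0" "w0 \<in> pos_words n"
      unfolding S_def simple_braids_def by auto
    have ex: "(\<exists>w\<in>x. rdiv n a w) \<longleftrightarrow> rdiv n a w0" for a
      using w0(1) rdiv_eq cls_mem eq_sym eq_refl by metis
    have "DL n D \<subseteq> DR n x \<longleftrightarrow> (\<forall>i. 1 \<le> i \<and> i < m \<longrightarrow> rdiv n [i] w0)"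
      unfolding F2 DR_def ex using mn by auto
    also have "\<dots> \<longleftrightarrow> (\<forall>i. 1 \<le> i \<and> i < m \<longrightarrow> dv n [i] (rev w0))"
      using rdiv_dv[OF w0(2)] by simp
    also have "\<dots> \<longleftrightarrow> dv n (delta m) (rev w0)"
    proof
      assume "\<forall>i. 1 \<le> i \<and> i < m \<longrightarrow> dv n [i] (rev w0)"
      then show "dv n (delta m) (rev w0)" using Claim mn by simp
    next
      assume h: "dv n (delta m) (rev w0)"
      show "\<forall>i. 1 \<le> i \<and> i < m \<longrightarrow> dv n [i] (rev w0)"
        using LD[of m n] mn h dv_trans by (meson less_imp_le)
    qed
    also have "\<dots> \<longleftrightarrow> dv n (rev (delta m)) (rev w0)"
      using rev_delta[of m n] mn dv_eq1 eq_sym by (meson less_imp_le)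
    also have "\<dots> \<longleftrightarrow> rdiv n (delta m) w0" using rdiv_dv[OF w0(2)] by simp
    also have "\<dots> \<longleftrightarrow> x \<in> T" unfolding T_def using \<open>x \<in> S\<close> ex by simp
    finally show ?thesis .
  qed
  define B where "B x = {ys. length ys = d - 1 - 1 \<and> normal_seq n (ys @ [x])}" for x
  define A where "A = {xs. length xs = d - 1 \<and> normal_seq n (xs @ [D])}"
  have AU: "A = (\<Union>x\<in>T. (\<lambda>ys. ys @ [x]) ` B x)"
  proof (intro set_eqI iffI)
    fix xs assume "xs \<in> A"
    then have l: "length xs = d - 1" and ns: "normal_seq n (xs @ [D])" unfolding A_def by auto
    have ne: "xs \<noteq> []" using l assms by auto
    define ys where "ys = butlast xs"
    define x where "x = last xs"
    have xs: "xs = ys @ [x]" unfolding ys_def x_def using ne by simp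
    have ns2: "normal_seq n xs" "DL n D \<subseteq> DR n x" using ns normal_snoc ne unfolding x_def by auto
    have "x \<in> S" using ns2(1) xs unfolding normal_seq_def S_def by auto
    then have "x \<in> T" using F3 ns2(2) by blast
    moreover have "ys \<in> B x" unfolding B_def using l xs ns2(1) by auto
    ultimately show "xs \<in> (\<Union>x\<in>T. (\<lambda>ys. ys @ [x]) ` B x)" using xs by blast
  next
    fix xs assume "xs \<in> (\<Union>x\<in>T. (\<lambda>ys. ys @ [x]) ` B x)"
    then obtain x ys where x: "x \<in> T" "ys \<in> B x" "xs = ys @ [x]" by blast
    have "x \<in> S" using x unfolding T_def by auto
    then have "DL n D \<subseteq> DR n x" using F3 x by blast
    moreover have "normal_seq n (ys @ [x])" "length ys = d - 1 - 1" using x unfolding B_def by auto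
    ultimately have "normal_seq n ((ys @ [x]) @ [D])" using F1 unfolding S_def
      by (subst normal_snoc) simp
    then have "normal_seq n (xs @ [D])" using x(3) by simp
    moreover have "length xs = d - 1" using x(3) \<open>length ys = d - 1 - 1\<close> assms by simp
    ultimately show "xs \<in> A" unfolding A_def by simp
  qed
  have finS: "finite S" unfolding S_def by (rule finite_simple)
  have finT: "finite T" using finS unfolding T_def by simp
  have finB: "finite (B x)" for x
  proof -
    have "B x \<subseteq> {ys. set ys \<subseteq> S \<and> length ys \<le> d - 1 - 1}"
      unfolding B_def S_def normal_seq_def by auto
    moreover have "finite {ys. set ys \<subseteq> S \<and> length ys \<le> d - 1 - 1}"
      by (rule finite_lists_length_le[OF finS])
    ultimately show ?thesis using finite_subset by blast
  qed
  have "card A = (\<Sum>x\<in>T. card ((\<lambda>ys. ys @ [x]) ` B x))"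
    unfolding AU
    by (rule card_UN_disjoint) (use finT finB in auto)
  also have "\<dots> = (\<Sum>x\<in>T. card (B x))"
    by (rule sum.cong) (auto intro!: card_image inj_onI)
  finally have "card A = (\<Sum>x\<in>T. card (B x))" .
  then show ?thesis
    unfolding bnd_def A_def B_def T_def S_def D_def m_def by simp
qed

end
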